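(* Let \(m\) be a positive integer that is not a perfect square, let \(a,b,c\) be positive integers with \(\gcd(a,b^2-c^2m)=1\), and let \(A,B\in\mathbb Z\). If \(A\geq (a-1)(b-1+cm)\) and \(B\geq (a-1)(b-1+c)\), then there exist \(x,y,z,w\in\mathbb N\) with \(a(x+y\sqrt m)+(b+c\sqrt m)(z+w\sqrt m)=A+B\sqrt m\).
   Context: \(\mathbb N\) denotes the set of non-negative integers. *)

theory Defs
  imports Complex_Main
begin

end

theory Submission
  imports Defs
begin

theorem theorem1:
  fixes m a b c :: nat and A B :: int
  assumes "m > 0"
    and "\<not> (\<exists>k::nat. k ^ 2 = m)"
    and "a > 0" and "b > 0" and "c > 0"
    and "gcd (int a) (int b ^ 2 - int c ^ 2 * int m) = 1"
    and "A \<ge> (int a - 1) * (int b - 1 + int c * int m)"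
    and "B \<ge> (int a - 1) * (int b - 1 + int c)"
  shows "\<exists>x y z w :: nat.
           real a * (real x + real y * sqrt (real m))
           + (real b + real c * sqrt (real m)) * (real z + real w * sqrt (real m))
           = real_of_int A + real_of_int B * sqrt (real m)"
proof -
  define D where "D = int b ^ 2 - int c ^ 2 * int m"
  obtain u v where uv: "u * int a + v * D = 1"
    using bezout_int[of "int a" D] assms(6) unfolding D_def by auto
  define z0 where "z0 = v * (int b * A - int c * int m * B)"
  define w0 where "w0 = v * (int b * B - int c * A)"
  define z where "z = z0 mod int a"
  define w where "w = w0 mod int a"
  have ap: "int a > 0" using assms(3) by simp
  have zr: "0 \<le> z" "z \<le> int a - 1" unfolding z_def using ap by auto
  have wr: "0 \<le> w" "w \<le> int a - 1" unfolding w_def using ap by auto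
  have zd: "z = z0 - int a * (z0 div int a)" unfolding z_def by (simp add: minus_div_mult_eq_mod[symmetric] algebra_simps)
  have wd: "w = w0 - int a * (w0 div int a)" unfolding w_def by (simp add: minus_div_mult_eq_mod[symmetric] algebra_simps)
  have vD: "v * D = 1 - u * int a" using uv by simp
  define x' where "x' = u * A + int b * (z0 div int a) + int c * int m * (w0 div int a)"
  define y' where "y' = u * B + int c * (z0 div int a) + int b * (w0 div int a)"
  have e1: "int b * z0 + int c * int m * w0 = v * D * A"
    unfolding z0_def w0_def D_def by (simp add: algebra_simps power2_eq_square)
  have e2: "int c * z0 + int b * w0 = v * D * B"
    unfolding z0_def w0_def D_def by (simp add: algebra_simps power2_eq_square)
  have X: "int a * x' = A - int b * z - int c * int m * w"
  proof -
    have "A - int b * z - int c * int m * w = A - (int b * z0 + int c * int m * w0)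
       + int a * (int b * (z0 div int a) + int c * int m * (w0 div int a))"
      unfolding zd wd by (simp add: algebra_simps)
    also have "\<dots> = int a * x'" unfolding e1 vD x'_def by (simp add: algebra_simps)
    finally show ?thesis by simp
  qed
  have Y: "int a * y' = B - int c * z - int b * w"
  proof -
    have "B - int c * z - int b * w = B - (int c * z0 + int b * w0)
       + int a * (int c * (z0 div int a) + int b * (w0 div int a))"
      unfolding zd wd by (simp add: algebra_simps)
    also have "\<dots> = int a * y'" unfolding e2 vD y'_def by (simp add: algebra_simps)
    finally show ?thesis by simp
  qed
  have bz: "int b * z \<le> int b * (int a - 1)" using zr by (intro mult_left_mono) auto
  have cw: "int c * int m * w \<le> int c * int m * (int a - 1)" using wr by (intro mult_left_mono) auto
  have cz: "int c * z \<le> int c * (int a - 1)" using zr by (intro mult_left_mono) auto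
  have bw: "int b * w \<le> int b * (int a - 1)" using wr by (intro mult_left_mono) auto
  have "int a * x' > int a * (-1)"
    using X bz cw assms(7) by (simp add: algebra_simps)
  hence "x' > -1" using ap mult_less_cancel_left_pos by metis
  hence x0: "x' \<ge> 0" by simp
  have "int a * y' > int a * (-1)"
    using Y cz bw assms(8) by (simp add: algebra_simps)
  hence "y' > -1" using ap mult_less_cancel_left_pos by metis
  hence y0: "y' \<ge> 0" by simp
  define s where "s = sqrt (real m)"
  have ss: "s * s = real m" unfolding s_def by simp
  have X': "real a * real_of_int x' + real b * real_of_int z + real c * real m * real_of_int w = real_of_int A"
    using arg_cong[OF X, of real_of_int] by (simp add: algebra_simps)
  have Y': "real a * real_of_int y' + real c * real_of_int z + real b * real_of_int w = real_of_int B"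
    using arg_cong[OF Y, of real_of_int] by (simp add: algebra_simps)
  have "real a * (real_of_int x' + real_of_int y' * s)
           + (real b + real c * s) * (real_of_int z + real_of_int w * s)
        = (real a * real_of_int x' + real b * real_of_int z + real c * (s * s) * real_of_int w)
          + (real a * real_of_int y' + real c * real_of_int z + real b * real_of_int w) * s"
    by (simp add: algebra_simps)
  also have "\<dots> = real_of_int A + real_of_int B * s" using X' Y' ss by simp
  finally have fin: "real a * (real_of_int x' + real_of_int y' * s)
           + (real b + real c * s) * (real_of_int z + real_of_int w * s)
        = real_of_int A + real_of_int B * s" .
  show ?thesis
    apply (rule exI[of _ "nat x'"], rule exI[of _ "nat y'"], rule exI[of _ "nat z"], rule exI[of _ "nat w"])
    using fin x0 y0 zr(1) wr(1) unfolding s_def by simp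
qed

end
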